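(* Let $(a,b)\in\mathbb{N}^2$ with $a\ge 2$, and let $\ell$ be a prime with $\ell>\max(a,b)$. Write the base-$a$ expansion of $\ell$ as \[ \ell = a_d a^{d-1}+a_{d-1}a^{d-2}+\cdots+a_2 a+a_1,\qquad 0\le a_i\le a-1 \text{ for all } i, \] and define \[ \mathcal{P}(x):=\frac{x\,b}{\ell\,a}\left(a_d x^{d-1}+a_{d-1}x^{d-2}+\cdots+a_1\right). \] Then $\mathcal{P}(a)=b$, i.e. $(a,b)$ lies on the curve $y=\mathcal{P}(x)$, and there is no lattice point on the portion of this curve joining $(0,0)$ to $(a,b)$; that is, for every integer $t$ with $0<t<a$, $\mathcal{P}(t)\notin\mathbb{Z}$.
   Context: $\mathbb{N}$ denotes the positive integers. The $a_i$ are the base-$a$ digits of $\ell$ (with $a_1$ the units digit). *)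

theory Defs
  imports Complex_Main "HOL-Computational_Algebra.Primes"
begin

definition curveP :: "nat \<Rightarrow> nat \<Rightarrow> nat \<Rightarrow> nat \<Rightarrow> (nat \<Rightarrow> nat) \<Rightarrow> real \<Rightarrow> real" where
  "curveP a b l d dig x =
     x * real b / (real l * real a) * (\<Sum>i=1..d. real (dig i) * x ^ (i - 1))"

end

theory Submission
  imports Defs
begin

theorem theorem2p1:
  fixes a b l d :: nat and dig :: "nat \<Rightarrow> nat"
  assumes "a \<ge> 2" and "b \<ge> 1"
    and "prime l" and "l > max a b"
    and "\<forall>i\<in>{1..d}. dig i \<le> a - 1"
    and "l = (\<Sum>i=1..d. dig i * a ^ (i - 1))"
  shows "curveP a b l d dig (real a) = real b
         \<and> (\<forall>t::int. 0 < t \<and> t < int a \<longrightarrow> curveP a b l d dig (real_of_int t) \<notin> \<int>)"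
proof -
  define S where "S x = (\<Sum>i=1..d. dig i * x ^ (i - 1))" for x :: nat
  have cS: "curveP a b l d dig (real x) = real (x * b * S x) / real (l * a)" for x
    unfolding curveP_def S_def by simp
  have lS: "S a = l" using assms(6) S_def by simp
  have part1: "curveP a b l d dig (real a) = real b"
    using cS[of a] lS assms(1,3) prime_gt_0_nat[OF assms(3)] by simp
  have "\<exists>j\<in>{2..d}. dig j > 0"
  proof (rule ccontr)
    assume "\<not> (\<exists>j\<in>{2..d}. dig j > 0)"
    hence z: "\<forall>j\<in>{2..d}. dig j = 0" by auto
    have "(\<Sum>i=1..d. dig i * a^(i-1)) = (\<Sum>i\<in>{1..d}. if i = 1 then dig 1 else 0)"
      by (intro sum.cong refl) (use z in auto)
    hence "l = (\<Sum>i\<in>{1..d}. if i = 1 then dig 1 else 0)" using assms(6) by simp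
    also have "\<dots> = (if 1 \<in> {1..d} then dig 1 else 0)" by (rule sum.delta) simp
    also have "\<dots> \<le> a - 1" using assms(5) by auto
    finally show False using assms(1,4) by (simp add: max_def split: if_splits)
  qed
  then obtain j where j: "j \<in> {2..d}" "dig j > 0" by blast
  have part2: "curveP a b l d dig (real_of_int t) \<notin> \<int>" if t: "0 < t" "t < int a" for t
  proof
    obtain n where n: "t = int n" using t(1) by (metis zero_le_imp_eq_int less_imp_le)
    have n0: "0 < n" "n < a" using t n by auto
    have "S n < S a" unfolding S_def
    proof (rule sum_strict_mono_ex1)
      show "\<forall>x\<in>{1..d}. dig x * n ^ (x - 1) \<le> dig x * a ^ (x - 1)"
        using n0 by (simp add: power_mono)
      show "\<exists>x\<in>{1..d}. dig x * n ^ (x - 1) < dig x * a ^ (x - 1)"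
        using j n0 by (intro bexI[of _ j]) (auto intro!: power_strict_mono)
    qed simp
    hence Sl: "S n < l" using lS by simp
    have "0 < dig j * n^(j-1)" using j n0 by simp
    also have "dig j * n^(j-1) \<le> S n" unfolding S_def
      by (rule member_le_sum) (use j in auto)
    finally have S0: "0 < S n" .
    assume "curveP a b l d dig (real_of_int t) \<in> \<int>"
    then obtain k where k: "curveP a b l d dig (real_of_int t) = of_int k" by (auto elim: Ints_cases)
    have la: "real (l * a) \<noteq> 0" using assms(1) prime_gt_0_nat[OF assms(3)] by simp
    have "real (n * b * S n) = of_int k * real (l * a)"
      using k cS[of n] n la by (simp add: field_simps)
    hence "int (n * b * S n) = k * int (l * a)" by (metis of_int_eq_iff of_int_mult of_int_of_nat_eq)
    hence "int (n * b * S n) = int l * (k * int a)" by (simp add: algebra_simps)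
    hence "int l dvd int (n * b * S n)" by (rule dvdI)
    hence "l dvd n * b * S n" by (simp only: int_dvd_int_iff)
    hence "l dvd n \<or> l dvd b \<or> l dvd S n" using assms(3) by (simp add: prime_dvd_mult_iff)
    thus False using n0 Sl S0 assms(2,4) by (auto dest: dvd_imp_le)
  qed
  show ?thesis using part1 part2 by blast
qed

end
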